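(* Let $W\subset\mathbb{P}^3$ be a general cubic surface. The assertion $H(4)$ holds: there is a type $\tau$ for degree $x_4=10$ trees such that $h^1(W,\mathcal{I}_{W\cap Y,W}(4))=0$ for a general $Y\in T(3,10,\tau)$ meeting $W$ transversally.
   Context: A degree $d$ tree in $\mathbb{P}^3$ is a connected nodal curve of degree $d$ and arithmetic genus $0$ whose components are lines. An ordering $L_1,\dots,L_d$ of the components is admissible if $L_1\cup\dots\cup L_i$ is connected for all $i$; then each $i\ge2$ has a unique $\tau(i)<i$ with $L_i\cap L_{\tau(i)}\ne\emptyset$, and $\tau$ is the type. $T(3,d,\tau)$ is the set of degree $d$ trees with an admissible ordering of type $\tau$. For the cubic surface $W$, $h^0(\mathcal{O}_W(t))=\binom{t+3}{3}-\binom{t}{3}$ and $x_t:=\lfloor h^0(\mathcal{O}_W(t))/3\rfloor$. Assertion $H(t)$: there is a type $\tau$ for degree $x_t$ trees such that $h^1(W,\mathcal{I}_{W\cap Y,W}(t))=0$ for a general $Y\in T(3,x_t,\tau)$ meeting $W$ transversally. *)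

theory Defs
  imports "HOL-Analysis.Analysis"
begin

(* Vectors in C^4 are functions nat => complex of which only indices 0..3 are used.
   A nonzero such vector represents a point of P^3. *)
type_synonym vec4 = "nat \<Rightarrow> complex"

definition nz :: "vec4 \<Rightarrow> bool" where
  "nz p \<longleftrightarrow> (\<exists>i<4. p i \<noteq> 0)"

definition proj_eq :: "vec4 \<Rightarrow> vec4 \<Rightarrow> bool" where
  "proj_eq p q \<longleftrightarrow> (\<exists>c. c \<noteq> 0 \<and> (\<forall>i<4. q i = c * p i))"

definition lin_indep2 :: "vec4 \<Rightarrow> vec4 \<Rightarrow> bool" where
  "lin_indep2 a b \<longleftrightarrow> (\<forall>s t. (\<forall>i<4. s * a i + t * b i = 0) \<longrightarrow> s = 0 \<and> t = 0)"

definition on_line :: "vec4 \<Rightarrow> vec4 \<Rightarrow> vec4 \<Rightarrow> bool" where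
  "on_line a b p \<longleftrightarrow> nz p \<and> (\<exists>s t. \<forall>i<4. p i = s * a i + t * b i)"

definition cubic :: "(nat \<Rightarrow> complex) \<Rightarrow> vec4 \<Rightarrow> complex" where
  "cubic c p = (\<Sum>i<4. \<Sum>j\<in>{i..<4}. \<Sum>k\<in>{j..<4}. c (16*i + 4*j + k) * p i * p j * p k)"

definition quartic :: "(nat \<Rightarrow> complex) \<Rightarrow> vec4 \<Rightarrow> complex" where
  "quartic g p = (\<Sum>i<4. \<Sum>j\<in>{i..<4}. \<Sum>k\<in>{j..<4}. \<Sum>l\<in>{k..<4}.
      g (64*i + 16*j + 4*k + l) * p i * p j * p k * p l)"

inductive_set polyfun :: "((nat \<Rightarrow> complex) \<Rightarrow> complex) set" where
  const: "(\<lambda>x. a) \<in> polyfun"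
| var: "(\<lambda>x. x n) \<in> polyfun"
| add: "f \<in> polyfun \<Longrightarrow> g \<in> polyfun \<Longrightarrow> (\<lambda>x. f x + g x) \<in> polyfun"
| mult: "f \<in> polyfun \<Longrightarrow> g \<in> polyfun \<Longrightarrow> (\<lambda>x. f x * g x) \<in> polyfun"

(* "a general element x of S (an irreducible parameter set) satisfies P":
   P holds on the complement in S of the zero set of a polynomial not vanishing identically on S *)
definition general_on :: "(nat \<Rightarrow> complex) set \<Rightarrow> ((nat \<Rightarrow> complex) \<Rightarrow> bool) \<Rightarrow> bool" where
  "general_on S P \<longleftrightarrow> (\<exists>f\<in>polyfun. (\<exists>x\<in>S. f x \<noteq> 0) \<and> (\<forall>x\<in>S. f x \<noteq> 0 \<longrightarrow> P x))"

definition h0W :: "nat \<Rightarrow> nat" where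
  "h0W t = ((t + 3) choose 3) - (t choose 3)"

definition xt :: "nat \<Rightarrow> nat" where
  "xt t = h0W t div 3"

definition is_type :: "nat \<Rightarrow> (nat \<Rightarrow> nat) \<Rightarrow> bool" where
  "is_type d \<tau> \<longleftrightarrow> (\<forall>i\<in>{2..d}. 1 \<le> \<tau> i \<and> \<tau> i < i)"

(* parameters x encode lines L_1..L_d: L_i is spanned by lnA x i and lnB x i *)
definition lnA :: "(nat \<Rightarrow> complex) \<Rightarrow> nat \<Rightarrow> vec4" where
  "lnA x i = (\<lambda>k. x (8*i + k))"

definition lnB :: "(nat \<Rightarrow> complex) \<Rightarrow> nat \<Rightarrow> vec4" where
  "lnB x i = (\<lambda>k. x (8*i + 4 + k))"

definition on_L :: "(nat \<Rightarrow> complex) \<Rightarrow> nat \<Rightarrow> vec4 \<Rightarrow> bool" where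
  "on_L x i p \<longleftrightarrow> on_line (lnA x i) (lnB x i) p"

definition meets :: "(nat \<Rightarrow> complex) \<Rightarrow> nat \<Rightarrow> nat \<Rightarrow> bool" where
  "meets x i j \<longleftrightarrow> (\<exists>p. on_L x i p \<and> on_L x j p)"

(* T(3,d,tau): the lines L_1..L_d are pairwise distinct, and L_i meets L_j (i ~= j) exactly
   when j = tau i or i = tau j; i.e. Y = union of L_i is a connected nodal curve of arithmetic
   genus 0 (dual graph the tree given by tau) and 1..d is an admissible ordering of type tau *)
definition T3 :: "nat \<Rightarrow> (nat \<Rightarrow> nat) \<Rightarrow> (nat \<Rightarrow> complex) set" where
  "T3 d \<tau> = {x. (\<forall>i\<in>{1..d}. lin_indep2 (lnA x i) (lnB x i)) \<and>
     (\<forall>i\<in>{1..d}. \<forall>j\<in>{1..d}. i \<noteq> j \<longrightarrow>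
        (\<exists>p. on_L x i p \<and> \<not> on_L x j p) \<and>
        (meets x i j \<longleftrightarrow> ((2 \<le> i \<and> j = \<tau> i) \<or> (2 \<le> j \<and> i = \<tau> j))))}"

(* Y meets the cubic surface W = {cubic c = 0} transversally: at every point p of W \<inter> Y,
   p lies on only one line L_i of Y and the directional derivative of the cubic along L_i is
   nonzero (W smooth at p, L_i not tangent to W) *)
definition transversal :: "nat \<Rightarrow> (nat \<Rightarrow> complex) \<Rightarrow> (nat \<Rightarrow> complex) \<Rightarrow> bool" where
  "transversal d c x \<longleftrightarrow> (\<forall>i\<in>{1..d}. \<forall>p. on_L x i p \<and> cubic c p = 0 \<longrightarrow>
      (\<forall>j\<in>{1..d}. j \<noteq> i \<longrightarrow> \<not> on_L x j p) \<and>
      (\<forall>q. on_L x i q \<and> \<not> proj_eq p q \<longrightarrow>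
         deriv (\<lambda>e. cubic c (\<lambda>k. p k + e * q k)) 0 \<noteq> 0))"

definition WY :: "nat \<Rightarrow> (nat \<Rightarrow> complex) \<Rightarrow> (nat \<Rightarrow> complex) \<Rightarrow> vec4 set" where
  "WY d c x = {p. (\<exists>i\<in>{1..d}. on_L x i p) \<and> cubic c p = 0}"

(* h^1(W, I_{W\<inter>Y,W}(t)) = 0 for t = 4, i.e. the (reduced, finite) scheme W \<inter> Y imposes
   independent conditions on quartic forms: for each of its points there is a quartic not
   vanishing there but vanishing at all other points *)
definition h1_vanish4 :: "nat \<Rightarrow> (nat \<Rightarrow> complex) \<Rightarrow> (nat \<Rightarrow> complex) \<Rightarrow> bool" where
  "h1_vanish4 d c x \<longleftrightarrow> (\<forall>p\<in>WY d c x. \<exists>g. quartic g p \<noteq> 0 \<and>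
       (\<forall>q\<in>WY d c x. \<not> proj_eq p q \<longrightarrow> quartic g q = 0))"

end

theory Submission
  imports Defs "Jordan_Normal_Form.Determinant" "HOL-Number_Theory.Cong"
begin

datatype cdesc = Mo nat nat nat nat | Lc nat nat

definition ptv :: "(nat \<Rightarrow> 'a::comm_ring_1) \<Rightarrow> nat \<Rightarrow> 'a \<Rightarrow> nat \<Rightarrow> 'a" where
  "ptv x j u = (\<lambda>i. u * x (8*j+i) + x (8*j+4+i))"

definition cub :: "(nat \<Rightarrow> 'a::comm_ring_1) \<Rightarrow> (nat \<Rightarrow> 'a) \<Rightarrow> 'a" where
  "cub c p = (\<Sum>i<4. \<Sum>j\<in>{i..<4}. \<Sum>k\<in>{j..<4}. c (16*i + 4*j + k) * p i * p j * p k)"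

lemma cubic_cub: "cubic c p = cub c p" by (simp add: cubic_def cub_def)

fun ent :: "(nat \<Rightarrow> 'a::comm_ring_1) \<Rightarrow> (nat \<Rightarrow> 'a) \<Rightarrow> cdesc \<Rightarrow> nat \<Rightarrow> nat \<Rightarrow> 'a" where
  "ent c x (Mo a b d e) j k = ptv x j (of_nat k) a * ptv x j (of_nat k) b * ptv x j (of_nat k) d * ptv x j (of_nat k) e"
| "ent c x (Lc j' e) j k = (if j' = j then of_nat k ^ e * cub c (ptv x j (of_nat k)) else 0)"

definition cols :: "cdesc list" where "cols = [Mo 0 0 0 0, Mo 1 1 1 1, Mo 0 0 0 1, Mo 0 0 1 1, Mo 0 1 1 1, Mo 1 1 1 2, Mo 1 1 2 2, Mo 1 2 2 2, Mo 2 2 2 2, Lc 1 0, Mo 1 1 1 3, Mo 1 1 2 3, Mo 1 2 2 3, Mo 2 2 2 3, Lc 2 0, Mo 0 0 0 2, Mo 0 0 0 3, Mo 0 0 1 2, Mo 0 1 1 2, Lc 3 0, Mo 0 0 1 3, Mo 0 0 2 2, Mo 0 2 2 2, Mo 2 2 3 3, Lc 4 0, Mo 0 0 2 3, Mo 0 0 3 3, Mo 0 2 2 3, Mo 2 3 3 3, Lc 5 0, Mo 0 1 1 3, Mo 0 1 2 2, Mo 0 1 2 3, Mo 1 1 3 3, Lc 6 0, Mo 0 1 3 3, Mo 0 2 3 3, Mo 0 3 3 3, Mo 1 2 3 3, Lc 7 0, Mo 1 3 3 3, Mo 3 3 3 3, Lc 1 1, Lc 2 1, Lc 8 0, Lc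 3 1, Lc 4 1, Lc 5 1, Lc 6 1, Lc 9 0]"

definition Mx :: "(nat \<Rightarrow> 'a::comm_ring_1) \<Rightarrow> (nat \<Rightarrow> 'a) \<Rightarrow> 'a mat" where
  "Mx c x = mat 50 50 (\<lambda>(r,q). ent c x (cols!q) (r div 5 + 1) (r mod 5))"

definition fpoly :: "(nat \<Rightarrow> 'a::comm_ring_1) \<Rightarrow> (nat \<Rightarrow> 'a) \<Rightarrow> 'a" where
  "fpoly c x = det (Mx c x) * (\<Prod>j\<in>{1..10::nat}. cub c (\<lambda>i. x (8*j+i)))"

lemma cub_cong: "(\<And>i. i < 4 \<Longrightarrow> p i = q i) \<Longrightarrow> cub c p = cub c q"
  unfolding cub_def by (intro sum.cong refl) auto

lemma cub_hom: "cub c (\<lambda>i. t * p i) = t^3 * cub c p"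
  unfolding cub_def by (simp add: sum_distrib_left algebra_simps power3_eq_cube)

definition lin :: "(nat \<Rightarrow> 'a::comm_ring_1) \<Rightarrow> (nat \<Rightarrow> 'a) \<Rightarrow> nat \<Rightarrow> 'a poly" where
  "lin a b i = [:b i, a i:]"

lemma poly_lin[simp]: "poly (lin a b i) u = u * a i + b i"
  by (simp add: lin_def algebra_simps)

lemma degree_lin: "degree (lin a b i) \<le> 1"
  by (simp add: lin_def)

definition Fp :: "(nat \<Rightarrow> 'a::comm_ring_1) \<Rightarrow> (nat \<Rightarrow> 'a) \<Rightarrow> (nat \<Rightarrow> 'a) \<Rightarrow> 'a poly" where
  "Fp c a b = (\<Sum>i<4. \<Sum>j\<in>{i..<4}. \<Sum>k\<in>{j..<4}. Polynomial.smult (c (16*i + 4*j + k)) (lin a b i * lin a b j * lin a b k))"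

lemma poly_Fp: "poly (Fp c a b) u = cub c (\<lambda>n. u * a n + b n)"
  by (simp add: Fp_def cub_def poly_sum mult.assoc)

lemma degree_lin3: "degree (lin a b i * lin a b j * lin a b k) \<le> 3"
proof -
  have "degree (lin a b i * lin a b j * lin a b k) \<le> degree (lin a b i * lin a b j) + degree (lin a b k)"
    by (rule degree_mult_le)
  also have "\<dots> \<le> degree (lin a b i) + degree (lin a b j) + degree (lin a b k)"
    using degree_mult_le by (metis add_le_mono1)
  also have "\<dots> \<le> 3" using degree_lin[of a b i] degree_lin[of a b j] degree_lin[of a b k] by simp
  finally show ?thesis .
qed

lemma degree_Fp: "degree (Fp c a b) \<le> 3"
  unfolding Fp_def
  by (intro degree_sum_le finite_lessThan finite_atLeastLessThan order.trans[OF Polynomial.degree_smult_le degree_lin3])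

lemma coeff_lin3: "coeff (lin a b i * lin a b j * lin a b k) 3 = a i * a j * a k"
  by (simp add: lin_def numeral_3_eq_3 coeff_pCons_Suc algebra_simps)

lemma coeff_Fp: "coeff (Fp c a b) 3 = cub c a"
  unfolding Fp_def cub_def by (simp only: coeff_sum coeff_smult coeff_lin3) (simp add: mult.assoc)

lemma Fp_nz: "cub c a \<noteq> 0 \<Longrightarrow> Fp c a b \<noteq> 0"
  using coeff_Fp[of c a b] by force

lemma quartic_lin: "quartic (\<lambda>n. s * g1 n + g2 n) p = s * quartic g1 p + quartic g2 p"
  by (simp add: quartic_def sum.distrib sum_distrib_left algebra_simps)

lemma quartic_zero: "quartic (\<lambda>n. 0) p = 0" by (simp add: quartic_def)

fun mv :: "cdesc \<Rightarrow> (nat \<Rightarrow> 'a::comm_ring_1) \<Rightarrow> 'a" where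
  "mv (Mo a b d e) p = p a * p b * p d * p e" | "mv (Lc j e) p = 0"

lemma set4: "{..<4::nat} = {0,1,2,3}" "{0..<4::nat} = {0,1,2,3}" "{1..<4::nat} = {1,2,3}"
  "{2..<4::nat} = {2,3}" "{3..<4::nat} = {3}" "{Suc 0..<4::nat} = {Suc 0,2,3}" by auto

lemmas sexp = set4

lemma quartic_expand: "quartic g p = g 0 * p 0 * p 0 * p 0 * p 0 + g 1 * p 0 * p 0 * p 0 * p 1 + g 2 * p 0 * p 0 * p 0 * p 2 + g 3 * p 0 * p 0 * p 0 * p 3 + g 5 * p 0 * p 0 * p 1 * p 1 + g 6 * p 0 * p 0 * p 1 * p 2 + g 7 * p 0 * p 0 * p 1 * p 3 + g 10 * p 0 * p 0 * p 2 * p 2 + g 11 * p 0 * p 0 * p 2 * p 3 + g 15 * p 0 * p 0 * p 3 * p 3 + g 21 * p 0 * p 1 * p 1 * p 1 + g 22 * p 0 * p 1 * p 1 * p 2 + g 23 * p 0 * p 1 * p 1 * p 3 + g 26 * p 0 * p 1 * p 2 * p 2 + g 27 * p 0 * p 1 * p 2 * p 3 + g 31 * p 0 * p 1 * p 3 * p 3 + g 42 * p 0 * p 2 * p 2 * p 2 + g 43 * p 0 * p 2 * p 2 * p 3 + g 47 * p 0 * p 2 * p 3 * p 3 + g 63 * p 0 * p 3 * p 3 * p 3 + g 85 * p 1 * p 1 * p 1 * p 1 + g 86 * p 1 * p 1 * p 1 * p 2 + g 87 * p 1 * p 1 * p 1 * p 3 + g 90 * p 1 * p 1 * p 2 * p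 2 + g 91 * p 1 * p 1 * p 2 * p 3 + g 95 * p 1 * p 1 * p 3 * p 3 + g 106 * p 1 * p 2 * p 2 * p 2 + g 107 * p 1 * p 2 * p 2 * p 3 + g 111 * p 1 * p 2 * p 3 * p 3 + g 127 * p 1 * p 3 * p 3 * p 3 + g 170 * p 2 * p 2 * p 2 * p 2 + g 171 * p 2 * p 2 * p 2 * p 3 + g 175 * p 2 * p 2 * p 3 * p 3 + g 191 * p 2 * p 3 * p 3 * p 3 + g 255 * p 3 * p 3 * p 3 * p 3"
  unfolding quartic_def by (simp add: sexp add.assoc)

lemma mono_cols_all: "list_all (\<lambda>t. case t of Mo a b d e \<Rightarrow> (\<forall>p. quartic (\<lambda>n. if n = 64*a+16*b+4*d+e then 1 else 0) p = p a * p b * p d * p e) | Lc _ _ \<Rightarrow> True) cols"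
  by (simp add: cols_def quartic_expand)

lemma mono_cols: "t \<in> set cols \<Longrightarrow> \<exists>g. \<forall>p. quartic g p = mv t p"
proof (cases t)
  case (Mo a b d e)
  assume "t \<in> set cols"
  have "case t of Mo a b d e \<Rightarrow> (\<forall>p. quartic (\<lambda>n. if n = 64*a+16*b+4*d+e then 1 else 0) p = p a * p b * p d * p e) | Lc _ _ \<Rightarrow> True"
    by (rule bspec[OF mono_cols_all[unfolded list_all_iff] \<open>t \<in> set cols\<close>])
  then have "\<forall>p. quartic (\<lambda>n. if n = 64*a+16*b+4*d+e then 1 else 0) p = mv t p"
    unfolding Mo by simp
  then show ?thesis by blast
next
  case (Lc j e)
  then show ?thesis using quartic_zero by (intro exI[of _ "\<lambda>n. 0"]) simp
qed

lemma quartic_sum: "n \<le> length cols \<Longrightarrow> \<exists>g. \<forall>p. quartic g p = (\<Sum>q<n. z q * mv (cols!q) p)"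
proof (induction n)
  case 0
  then show ?case using quartic_zero by (intro exI[of _ "\<lambda>n. 0"]) simp
next
  case (Suc n)
  then obtain g where g: "\<forall>p. quartic g p = (\<Sum>q<n. z q * mv (cols!q) p)" by auto
  from Suc.prems have "cols!n \<in> set cols" by simp
  then obtain g' where g': "\<forall>p. quartic g' p = mv (cols!n) p" using mono_cols by blast
  show ?case
    apply (rule exI[of _ "\<lambda>m. z n * g' m + g m"])
    apply (simp only: quartic_lin g g')
    apply (simp add: add.commute)
    done
qed

lemma solve_sys:
  fixes A :: "complex mat"
  assumes A: "A \<in> carrier_mat n n" and d: "det A \<noteq> 0" and y: "y \<in> carrier_vec n"
  shows "\<exists>z \<in> carrier_vec n. A *\<^sub>v z = y"
proof -
  from det_non_zero_imp_unit[OF A d, of "()"]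
  obtain B where AB: "A * B = 1\<^sub>m n" and B: "B \<in> carrier_mat n n"
    unfolding Units_def ring_mat_def by auto
  have "A *\<^sub>v (B *\<^sub>v y) = (A * B) *\<^sub>v y"
    using A B y by (simp add: assoc_mult_mat_vec)
  also have "\<dots> = y" using AB y by simp
  finally show ?thesis using B y by (intro bexI[of _ "B *\<^sub>v y"]) auto
qed

lemma cols_len: "length cols = 50" by (simp add: cols_def)

lemma cols_Mo: "Mo a b d e \<in> set cols \<Longrightarrow> a < 4 \<and> b < 4 \<and> d < 4 \<and> e < 4"
  by (simp add: cols_def) (elim disjE; simp)

lemma cols_Lc: "Lc j e \<in> set cols \<Longrightarrow> e \<le> 1"
  by (simp add: cols_def) (elim disjE; simp)

fun colp :: "(nat \<Rightarrow> complex) \<Rightarrow> (nat \<Rightarrow> complex) \<Rightarrow> cdesc \<Rightarrow> nat \<Rightarrow> complex poly" where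
  "colp c x (Mo a b d e) j = lin (lnA x j) (lnB x j) a * lin (lnA x j) (lnB x j) b * lin (lnA x j) (lnB x j) d * lin (lnA x j) (lnB x j) e"
| "colp c x (Lc j' e) j = (if j' = j then monom 1 e * Fp c (lnA x j) (lnB x j) else 0)"

lemma ptv_ln: "ptv x j u = (\<lambda>n. u * lnA x j n + lnB x j n)"
  by (simp add: ptv_def lnA_def lnB_def add.assoc)

lemma poly_colp_ent: "poly (colp c x t j) (of_nat k) = ent c x t j k"
  by (cases t) (simp_all add: ptv_ln poly_Fp poly_monom)

lemma poly_colp_root:
  assumes "poly (Fp c (lnA x j) (lnB x j)) u = 0"
  shows "poly (colp c x t j) u = mv t (ptv x j u)"
  using assms by (cases t) (simp_all add: ptv_ln poly_monom)

lemma degree_colp: "t \<in> set cols \<Longrightarrow> degree (colp c x t j) \<le> 4"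
proof (cases t)
  case (Mo a b d e)
  let ?l = "lin (lnA x j) (lnB x j)"
  have "degree (?l a * ?l b * ?l d * ?l e) \<le> degree (?l a * ?l b * ?l d) + degree (?l e)"
    by (rule degree_mult_le)
  also have "\<dots> \<le> 3 + 1" using degree_lin3 degree_lin by (intro add_mono)
  finally show ?thesis using Mo by simp
next
  case (Lc j' e)
  assume "t \<in> set cols"
  then have e: "e \<le> 1" using Lc cols_Lc by simp
  have "degree (monom (1::complex) e * Fp c (lnA x j) (lnB x j)) \<le> degree (monom (1::complex) e) + degree (Fp c (lnA x j) (lnB x j))"
    by (rule degree_mult_le)
  also have "\<dots> \<le> 1 + 3" using e degree_Fp by (intro add_mono) (simp_all add: degree_monom_eq)
  finally show ?thesis using Lc by simp
qed

lemma poly5_zero: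
  fixes P :: "complex poly"
  assumes "degree P \<le> 4" and "\<And>k. k < 5 \<Longrightarrow> poly P (of_nat k) = 0"
  shows "P = 0"
proof (rule ccontr)
  assume nz: "P \<noteq> 0"
  have sub: "of_nat ` {0..<5} \<subseteq> {x. poly P x = 0}" using assms(2) by auto
  have c5: "card (of_nat ` {0..<5::nat} :: complex set) = 5"
    by (subst card_image) (auto simp: inj_on_def)
  have "card (of_nat ` {0..<5::nat} :: complex set) \<le> card {x. poly P x = 0}"
    using card_mono[OF poly_roots_finite[OF nz] sub] by simp
  moreover have "card {x. poly P x = 0} \<le> degree P" by (rule card_poly_roots_bound[OF nz])
  ultimately show False using assms(1) c5 by linarith
qed


lemma param_root:
  fixes c x :: "nat \<Rightarrow> complex"
  assumes lc: "cub c (lnA x j) \<noteq> 0" and on: "on_L x j q" and cq: "cubic c q = 0"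
  shows "\<exists>t u. t \<noteq> 0 \<and> (\<forall>k<4. q k = t * ptv x j u k) \<and> poly (Fp c (lnA x j) (lnB x j)) u = 0"
proof -
  from on obtain s t where nzq: "nz q" and qst: "\<forall>k<4. q k = s * lnA x j k + t * lnB x j k"
    unfolding on_L_def on_line_def by blast
  show ?thesis
  proof (cases "t = 0")
    case True
    then have qs: "\<forall>k<4. q k = s * lnA x j k" using qst by simp
    then have "cub c q = cub c (\<lambda>k. s * lnA x j k)" by (intro cub_cong) auto
    also have "\<dots> = s^3 * cub c (lnA x j)" by (rule cub_hom)
    finally have "s^3 * cub c (lnA x j) = 0" using cq by (simp add: cubic_cub)
    then have "s = 0" using lc by simp
    then have False using nzq qs unfolding nz_def by auto
    then show ?thesis ..
  next
    case False
    define u where "u = s / t"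
    have eq: "\<forall>k<4. q k = t * ptv x j u k"
      using qst False by (simp add: ptv_ln u_def field_simps)
    have "cub c q = cub c (\<lambda>k. t * ptv x j u k)" using eq by (intro cub_cong) auto
    also have "\<dots> = t^3 * cub c (ptv x j u)" by (rule cub_hom)
    finally have "poly (Fp c (lnA x j) (lnB x j)) u = 0"
      using cq False by (simp add: cubic_cub poly_Fp ptv_ln)
    with eq False show ?thesis by blast
  qed
qed

lemma mainB:
  fixes c x :: "nat \<Rightarrow> complex"
  assumes f: "fpoly c x \<noteq> 0"
  shows "h1_vanish4 10 c x"
proof -
  let ?M = "Mx c x"
  have Mc: "?M \<in> carrier_mat 50 50" by (simp add: Mx_def)
  have dM: "det ?M \<noteq> 0" using f by (simp add: fpoly_def)
  have lc: "\<forall>j\<in>{1..10}. cub c (lnA x j) \<noteq> 0"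
    using f by (simp add: fpoly_def lnA_def)
  define F where "F j = Fp c (lnA x j) (lnB x j)" for j
  have key: "\<forall>j\<in>{1..10}. \<forall>q. on_L x j q \<and> cubic c q = 0 \<longrightarrow> (\<exists>t u. t \<noteq> 0 \<and> (\<forall>k<4. q k = t * ptv x j u k) \<and> poly (F j) u = 0)"
    using param_root lc unfolding F_def by blast
  show ?thesis unfolding h1_vanish4_def
  proof
    fix p assume pW: "p \<in> WY 10 c x"
    then obtain i where i: "i \<in> {1..10}" "on_L x i p" and cp: "cubic c p = 0" unfolding WY_def by blast
    obtain t0 u0 where t0: "t0 \<noteq> 0" and pt0: "\<forall>k<4. p k = t0 * ptv x i u0 k" and r0: "poly (F i) u0 = 0"
      using key i cp by blast
    have Fnz: "F i \<noteq> 0" using lc i Fp_nz unfolding F_def by blast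
    define R where "R = {u. poly (F i) u = 0} - {u0}"
    have finR: "finite R" unfolding R_def using poly_roots_finite[OF Fnz] by simp
    have cardR: "card R \<le> 3"
    proof -
      have "card R \<le> card {u. poly (F i) u = 0}" unfolding R_def using poly_roots_finite[OF Fnz] by (intro card_mono) auto
      also have "\<dots> \<le> degree (F i)" by (rule card_poly_roots_bound[OF Fnz])
      also have "\<dots> \<le> 3" unfolding F_def by (rule degree_Fp)
      finally show ?thesis .
    qed
    define h where "h = (\<Prod>r\<in>R. [:-r, 1:])"
    have degh: "degree h \<le> 3"
    proof -
      have "degree h \<le> sum (degree \<circ> (\<lambda>r. [:-r, 1::complex:])) R" unfolding h_def by (rule degree_prod_sum_le[OF finR])
      also have "\<dots> = card R" by simp
      finally show ?thesis using cardR by simp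
    qed
    have hu0: "poly h u0 \<noteq> 0" unfolding h_def poly_prod using finR by (auto simp: R_def prod_zero_iff)
    have hR: "\<forall>u\<in>R. poly h u = 0" unfolding h_def poly_prod using finR by (auto simp: prod_zero_iff)
    define T where "T j = (if j = i then h else 0)" for j
    define y where "y = vec 50 (\<lambda>r. poly (T (r div 5 + 1)) (of_nat (r mod 5)))"
    obtain z where z: "z \<in> carrier_vec 50" and Mz: "?M *\<^sub>v z = y"
      using solve_sys[OF Mc dM, of y] by (auto simp: y_def)
    obtain g where g: "\<forall>p. quartic g p = (\<Sum>q<50. z$q * mv (cols!q) p)"
      using quartic_sum[of 50 "\<lambda>q. z$q"] cols_len by auto
    define P where "P j = (\<Sum>q<50. Polynomial.smult (z$q) (colp c x (cols!q) j))" for j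
    have Peq: "poly (P j) u = poly (T j) u" if j: "j \<in> {1..10}" for j u
    proof -
      have "P j - T j = 0"
      proof (rule poly5_zero)
        have "degree (P j) \<le> 4" unfolding P_def
          by (intro degree_sum_le finite_lessThan order.trans[OF Polynomial.degree_smult_le] degree_colp)
             (simp add: cols_len)
        moreover have "degree (T j) \<le> 4" using degh by (simp add: T_def)
        ultimately show "degree (P j - T j) \<le> 4"
          using degree_diff_le by blast
      next
        fix k :: nat assume k: "k < 5"
        let ?r = "5*(j-1)+k"
        have r: "?r < 50" using j k by auto
        have rd: "?r div 5 + 1 = j" "?r mod 5 = k" using j k by auto
        have "(?M *\<^sub>v z) $ ?r = (\<Sum>q\<in>{0..<50}. ent c x (cols!q) j k * z$q)"
          using r z rd by (auto simp: Mx_def scalar_prod_def intro!: sum.cong)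
        also have "\<dots> = poly (P j) (of_nat k)"
          by (simp add: P_def poly_sum poly_colp_ent mult.commute lessThan_atLeast0)
        finally show "poly (P j - T j) (of_nat k) = 0" using Mz r rd by (simp add: y_def)
      qed
      then show ?thesis by simp
    qed
    have qval: "quartic g q = t^4 * poly (T j) u"
      if j: "j \<in> {1..10}" and qe: "\<forall>k<4. q k = t * ptv x j u k" and ru: "poly (F j) u = 0" for j q t u
    proof -
      have mvq: "mv (cols!m) q = t^4 * mv (cols!m) (ptv x j u)" if m: "m < 50" for m
      proof (cases "cols!m")
        case (Mo a b d e)
        have "cols!m \<in> set cols" using m cols_len by simp
        then have "a<4 \<and> b<4 \<and> d<4 \<and> e<4" using cols_Mo Mo by metis
        then show ?thesis using Mo qe by (simp add: power4_eq_xxxx algebra_simps)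
      next
        case (Lc j' e) then show ?thesis by simp
      qed
      have "quartic g q = (\<Sum>m<50. z$m * mv (cols!m) q)" using g by simp
      also have "\<dots> = (\<Sum>m<50. t^4 * (z$m * mv (cols!m) (ptv x j u)))"
        by (intro sum.cong refl) (simp add: mvq)
      also have "\<dots> = t^4 * (\<Sum>m<50. z$m * mv (cols!m) (ptv x j u))"
        by (simp add: sum_distrib_left)
      also have "(\<Sum>m<50. z$m * mv (cols!m) (ptv x j u)) = poly (P j) u"
        unfolding P_def poly_sum poly_smult using poly_colp_root[OF ru[unfolded F_def]] by simp
      also have "\<dots> = poly (T j) u" using Peq j by simp
      finally show ?thesis .
    qed
    have "quartic g p = t0^4 * poly h u0" using qval[OF i(1) pt0 r0] by (simp add: T_def)
    then have gp: "quartic g p \<noteq> 0" using t0 hu0 by simp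
    moreover have "\<forall>q\<in>WY 10 c x. \<not> proj_eq p q \<longrightarrow> quartic g q = 0"
    proof (intro ballI impI)
      fix q assume qW: "q \<in> WY 10 c x" and np: "\<not> proj_eq p q"
      then obtain j where j: "j \<in> {1..10}" "on_L x j q" and cq: "cubic c q = 0" unfolding WY_def by blast
      obtain t u where t: "t \<noteq> 0" and qt: "\<forall>k<4. q k = t * ptv x j u k" and ru: "poly (F j) u = 0"
        using key j cq by blast
      have qv: "quartic g q = t^4 * poly (T j) u" by (rule qval[OF j(1) qt ru])
      show "quartic g q = 0"
      proof (cases "j = i")
        case False then show ?thesis using qv by (simp add: T_def)
      next
        case ji: True
        show ?thesis
        proof (cases "u = u0")
          case True
          have "proj_eq p q" unfolding proj_eq_def
            using pt0 qt t0 t ji True by (intro exI[of _ "t / t0"]) (auto simp: field_simps)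
          then show ?thesis using np by blast
        next
          case False
          then have "u \<in> R" using ru ji by (simp add: R_def)
          then show ?thesis using qv hR ji by (simp add: T_def)
        qed
      qed
    qed
    ultimately show "\<exists>g. quartic g p \<noteq> 0 \<and> (\<forall>q\<in>WY 10 c x. \<not> proj_eq p q \<longrightarrow> quartic g q = 0)" by blast
  qed
qed

lemma pf_sum: "finite S \<Longrightarrow> (\<And>s. s \<in> S \<Longrightarrow> (\<lambda>v. f s v) \<in> polyfun) \<Longrightarrow> (\<lambda>v. \<Sum>s\<in>S. f s v) \<in> polyfun"
proof (induction S rule: finite_induct)
  case empty then show ?case by (simp add: polyfun.const)
next
  case (insert a S) then show ?case by (simp add: polyfun.add)
qed

lemma pf_prod: "finite S \<Longrightarrow> (\<And>s. s \<in> S \<Longrightarrow> (\<lambda>v. f s v) \<in> polyfun) \<Longrightarrow> (\<lambda>v. \<Prod>s\<in>S. f s v) \<in> polyfun"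
proof (induction S rule: finite_induct)
  case empty then show ?case by (simp add: polyfun.const)
next
  case (insert a S) then show ?case by (simp add: polyfun.mult)
qed

context
  fixes X C :: "(nat \<Rightarrow> complex) \<Rightarrow> nat \<Rightarrow> complex"
  assumes X: "\<And>n. (\<lambda>v. X v n) \<in> polyfun" and C: "\<And>n. (\<lambda>v. C v n) \<in> polyfun"
begin

lemma pf_ptv: "(\<lambda>v. ptv (X v) j u i) \<in> polyfun"
  unfolding ptv_def by (intro polyfun.add polyfun.mult polyfun.const X)

lemma pf_cub: "(\<And>i. (\<lambda>v. P v i) \<in> polyfun) \<Longrightarrow> (\<lambda>v. cub (C v) (P v)) \<in> polyfun"
  unfolding cub_def by (intro pf_sum polyfun.mult C finite_lessThan finite_atLeastLessThan) auto

lemma pf_ent: "(\<lambda>v. ent (C v) (X v) d j k) \<in> polyfun"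
proof (cases d)
  case (Mo a b d e)
  then show ?thesis by (simp only: ent.simps) (intro polyfun.mult pf_ptv)
next
  case (Lc j' e)
  show ?thesis
  proof (cases "j' = j")
    case True
    have "(\<lambda>v. of_nat k ^ e * cub (C v) (ptv (X v) j (of_nat k))) \<in> polyfun"
      by (intro polyfun.mult polyfun.const pf_cub pf_ptv)
    then show ?thesis using Lc True by simp
  next
    case False
    then show ?thesis using Lc by (simp add: polyfun.const)
  qed
qed

lemma Mx_carrier: "Mx c x \<in> carrier_mat 50 50" by (simp add: Mx_def)

lemma det_Mx: "det (Mx c x) = (\<Sum>p\<in>{p. p permutes {0..<50}}. signof p * (\<Prod>i=0..<50. ent c x (cols!(p i)) (i div 5 + 1) (i mod 5)))"
  unfolding det_def'[OF Mx_carrier]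
  by (intro sum.cong refl arg_cong2[where f="(*)"] prod.cong) (auto simp: Mx_def permutes_in_image)

lemma pf_fpoly: "(\<lambda>v. fpoly (C v) (X v)) \<in> polyfun"
  unfolding fpoly_def det_Mx
  by (intro polyfun.mult pf_sum pf_prod polyfun.const pf_ent pf_cub X finite_permutations finite_atLeastLessThan finite_atLeastAtMost)

end

lemma pf_inner: "(\<lambda>x. fpoly c x) \<in> polyfun"
  using pf_fpoly[of "\<lambda>v. v" "\<lambda>v. c"] by (simp add: polyfun.var polyfun.const)

lemma pf_outer: "(\<lambda>c. fpoly c x) \<in> polyfun"
  using pf_fpoly[of "\<lambda>v. x" "\<lambda>v. v"] by (simp add: polyfun.var polyfun.const)

definition XL :: "int list" where "XL = [0,0,0,0,0,0,0,0,3,0,3,0,-3,-1,1,0,0,-1,4,0,0,3,3,-1,0,2,7,-1,0,-1,1,-2,0,1,8,-3,1,-2,-1,-2,1,-1,7,-5,3,-3,1,3,4,-4,8,-2,-1,1,2,3,3,-3,10,1,1,-2,-1,-3,4,-5,9,-2,2,-3,3,2,6,-8,12,0,-1,0,1,-3,5,-8,13,-3,-1,0,-1,1]"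
definition CL :: "int list" where "CL = [2,-2,1,0,0,0,3,1,0,0,-1,-3,0,0,0,3,0,0,0,0,0,1,-3,-3,0,0,2,3,0,0,0,0,0,0,0,0,0,0,0,0,0,0,2,3,0,0,0,3,0,0,0,0,0,0,0,0,0,0,0,0,0,0,0,2]"
definition LL :: "int list list" where "LL = [[1],[0,1],[1,0,1],[16,994,12,1],[81,929,54,6,1],[0,81,0,0,0,1],[0,16,0,0,0,374,1],[0,1,0,0,0,299,505,1],[0,0,0,0,0,0,0,0,1],[0,1,0,0,0,710,1,1003,4,1],[0,1,0,0,0,867,787,670,494,896,1],[0,1,0,0,0,441,81,299,720,784,1008,1],[0,81,0,0,0,809,938,577,663,985,982,18,1],[0,625,0,0,0,723,564,95,726,793,884,75,5,1],[0,383,0,0,0,848,225,471,303,511,666,196,14,4,1],[436,589,517,410,772,922,67,839,20,523,132,148,125,604,136,1],[436,574,872,382,54,431,666,842,569,926,522,844,757,509,743,807,1],[436,573,218,709,859,0,0,0,370,0,0,0,0,764,832,604,2,1],[436,574,573,382,328,451,937,752,854,236,485,446,526,647,671,401,3,3,1],[436,589,928,410,647,73,217,605,552,743,845,1000,971,445,528,198,4,6,4,1],[1,80,2,672,338,270,663,40,533,699,525,951,845,112,207,845,980,323,491,115,1],[626,639,243,928,707,981,353,81,658,607,907,562,159,36,742,884,70,803,977,570,974,1],[70,555,140,626,453,28,820,267,110,353,191,366,57,487,428,125,41,449,442,593,42,886,1],[16,271,32,662,363,946,936,416,155,279,405,401,886,993,152,980,416,566,901,742,8,259,609,1],[503,8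89,1006,1,502,461,422,374,580,753,970,781,981,181,471,4,742,441,333,566,648,769,412,4,1],[436,574,872,382,54,5,0,818,803,378,980,628,427,667,280,707,374,431,449,454,901,273,189,708,392,1],[1,80,2,672,338,673,603,32,558,791,267,671,638,555,453,518,999,794,476,526,899,558,288,976,687,426,1],[503,889,1006,1,502,129,530,566,328,380,88,465,867,164,216,684,296,363,27,854,1007,651,96,1006,685,890,123,1],[542,982,75,984,567,616,609,925,958,29,294,59,257,204,930,732,132,693,235,940,730,503,683,746,704,796,713,293,1],[625,559,241,256,369,678,50,549,923,55,306,882,758,231,575,216,18,413,456,849,751,89,92,144,53,556,100,157,4,1],[436,589,517,410,772,922,67,839,20,523,686,392,271,823,201,1,486,464,268,91,174,874,274,406,565,194,3,962,165,327,1],[626,1008,730,254,688,42,482,914,428,323,996,275,648,752,324,96,175,544,856,591,49,517,725,938,675,874,973,91,217,290,103,1],[503,566,321,807,15,972,124,292,208,8,329,531,534,356,399,686,370,565,857,34,316,92,30,910,620,570,260,377,349,662,156,341,1],[111,404,390,355,15,705,673,87,295,724,672,771,285,609,367,482,681,267,516,673,743,489,92,71,483,438,137,247,668,731,843,517,725,1],[527,556,67,195,981,278,119,163,890,403,330,566,434,670,951,537,478,284,403,232,476,855,645,405,691,759,883,146,272,794,829,26,876,4,1],[922,168,13,581,703,68,966,23,520,7,810,337,814,717,273,816,218,989,933,185,792,110,541,820,717,192,816,892,545,237,385,101,454,771,451,1],[16,44,40,989,70,860,515,968,78,961,648,90,440,696,860,158,801,534,146,649,13,742,99,535,986,485,2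5,244,880,807,462,80,604,414,231,793,1],[111,198,726,759,850,53,208,677,651,971,538,689,96,307,806,64,683,513,845,892,336,43,25,802,614,299,590,486,433,444,98,918,246,554,890,923,499,1],[985,64,230,419,251,201,932,651,787,153,779,631,119,773,134,635,41,216,800,959,23,156,262,637,452,204,196,618,980,762,623,593,185,798,530,956,878,206,1],[287,61,105,539,894,830,7,111,225,321,349,977,254,176,589,240,225,890,163,953,530,497,1000,379,398,557,709,815,424,245,794,134,217,753,280,448,522,818,4,1],[436,573,218,709,859,0,0,0,0,0,0,0,0,828,776,202,971,3,223,694,856,996,693,502,1008,253,636,314,730,540,401,746,308,833,998,253,406,169,800,422,1],[70,999,203,645,758,561,553,258,442,439,245,355,519,562,755,300,631,486,830,468,78,799,541,778,227,267,773,132,115,477,550,641,684,489,1005,179,454,379,349,271,468,1],[542,418,628,76,165,269,472,254,309,900,81,5,825,208,754,601,330,478,772,708,236,806,611,205,275,338,300,825,769,356,726,50,586,658,61,467,282,680,416,790,29,342,1],[346,478,787,1,204,38,363,31,31,965,238,970,260,266,955,813,74,764,959,24,222,185,407,919,110,733,309,885,381,91,811,607,607,345,814,365,909,560,189,643,687,777,270,1],[378,856,934,939,652,233,75,666,901,73,854,367,654,787,991,400,931,819,760,494,249,777,800,743,156,242,474,624,607,802,676,821,701,419,357,1000,351,516,874,512,409,51,65,4,1],[436,573,218,709,859,0,0,0,0,0,0,0,0,276,595,0,486,464,268,428,160,189,20,857,332,0,256,916,186,910,405,0,422,685,188,213,397,153,191,856,512,204,600,346,987,1],[626,443,173,24,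877,561,200,245,196,232,104,108,254,16,337,759,490,800,810,91,300,665,35,75,299,145,349,170,96,718,628,963,513,962,15,775,246,770,939,944,786,431,129,642,645,328,1],[81,879,761,67,517,904,979,664,487,604,774,501,606,380,568,674,388,989,316,4,7,229,836,366,533,812,737,668,926,987,270,633,779,433,192,316,66,593,625,588,573,461,563,981,38,125,638,1],[985,848,647,298,202,36,956,382,489,1007,903,105,1,389,223,384,597,373,471,678,729,861,201,28,65,463,668,76,652,336,254,887,166,460,926,459,1005,791,485,188,230,704,648,937,28,272,298,162,1],[139,86,341,522,385,338,923,680,336,769,219,312,759,444,213,665,534,877,682,739,741,510,820,896,347,941,789,237,10,760,577,824,919,15,310,60,981,530,41,594,247,585,139,84,468,640,395,642,4,1]]"
definition UT :: "int list list" where "UT = [[81],[1,1],[27,0,955],[9,0,0,901],[3,0,1003,18,973],[1008,1005,1003,18,973,405],[1,16,48,757,288,803,300],[1008,945,667,142,290,220,150,116],[1,256,382,159,135,534,389,325,175],[990,83,510,309,755,340,664,843,0,26],[0,0,0,0,0,982,0,0,0,0,204],[0,0,0,0,0,982,989,0,0,0,805,182],[0,0,0,0,0,982,919,934,0,0,204,265,262],[0,0,0,0,0,982,674,351,661,0,805,284,117,223],[0,0,0,0,0,34,40,396,64,0,301,212,322,888,592],[982,0,216,0,0,0,0,0,0,0,0,0,0,0,0,999],[0,0,0,0,0,0,0,0,0,0,0,0,0,0,0,1007,600],[1000,0,955,432,0,0,0,0,0,0,0,0,0,0,0,20,2,24],[1006,0,24,829,144,0,0,0,0,0,0,0,0,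0,0,969,1003,965,72],[0,0,0,0,0,0,0,0,0,0,1007,650,491,327,0,349,875,757,454,496],[0,0,0,0,0,0,0,0,0,0,0,0,0,0,0,4,813,1003,0,0,865],[9,0,432,290,0,0,0,0,0,0,0,0,0,0,0,929,8,96,0,0,502,221],[1006,0,23,727,286,0,0,0,0,0,0,0,0,0,0,279,72,190,429,0,810,381,60],[0,0,0,0,0,9,719,602,225,0,569,539,460,220,0,831,589,574,280,0,706,521,293,714],[0,0,0,0,0,0,0,0,0,0,0,0,0,0,0,1005,553,824,885,0,814,679,562,445,633],[0,0,0,0,0,0,0,0,0,0,0,0,0,0,0,2,369,961,0,0,326,911,0,0,0,749],[0,0,0,0,0,0,0,0,0,0,0,0,0,0,0,4,833,18,0,0,918,290,0,0,0,555,432],[0,0,0,0,0,0,0,0,0,0,0,0,0,0,0,1007,360,706,866,0,619,348,955,0,0,229,554,650],[0,0,0,0,0,1006,106,833,994,0,105,555,327,677,0,444,254,996,895,0,458,488,448,393,0,702,768,341,703],[0,0,0,0,0,0,0,0,0,0,0,0,0,0,0,0,0,0,0,0,38,385,581,823,0,589,640,295,241,482],[0,0,0,0,0,0,0,0,0,0,0,0,0,0,0,1001,397,2,991,0,312,0,0,0,0,0,0,0,0,0,840],[3,0,859,143,433,0,0,0,0,0,0,0,0,0,0,160,8,208,288,0,507,788,0,0,0,0,0,0,0,0,0,349],[0,0,0,0,0,0,0,0,0,0,0,0,0,0,0,1005,236,935,865,0,876,98,0,0,0,260,0,0,0,0,666,921,593],[0,0,0,0,0,9,674,0,0,0,569,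537,0,0,0,839,719,342,737,0,522,297,0,0,0,169,432,0,0,0,347,645,895,576],[0,0,0,0,0,0,0,0,0,0,0,0,0,0,0,0,0,0,0,0,0,0,0,0,0,156,994,752,712,0,653,737,461,418,645],[0,0,0,0,0,0,0,0,0,0,0,0,0,0,0,1001,377,42,54,0,739,719,0,0,0,454,577,0,0,0,504,429,701,0,0,758],[0,0,0,0,0,0,0,0,0,0,0,0,0,0,0,1005,376,606,432,0,980,972,654,0,0,731,141,578,0,0,886,809,86,0,0,869,413],[0,0,0,0,0,0,0,0,0,0,0,0,0,0,0,1001,277,739,847,0,6,713,824,0,0,715,28,131,0,0,905,465,105,0,0,221,595,745],[0,0,0,0,0,9,684,5,0,0,440,184,263,0,0,75,491,132,228,0,405,434,207,0,0,509,30,475,0,0,303,524,325,478,0,814,706,355,160],[0,0,0,0,0,0,0,0,0,0,0,0,0,0,0,0,0,0,0,0,0,0,0,0,0,0,0,0,0,0,969,839,194,606,0,939,32,740,163,42],[0,0,0,0,0,1006,111,336,0,0,904,708,447,0,0,512,999,535,986,0,314,256,593,0,0,735,301,408,0,0,565,577,737,709,0,407,555,398,572,0,251],[0,0,0,0,0,1,636,393,1,0,644,53,98,34,0,552,209,101,535,0,977,631,375,628,0,734,890,617,325,0,118,567,465,712,0,804,425,857,77,0,43,634],[0,83,982,65,742,340,664,843,0,26,0,0,0,0,0,37,360,474,166,0,758,0,0,0,0,381,955,0,0,0,732,187,50,0,0,987,397,372,0,0,868,667,828],[0,0,0,0,0,0,648,660,192,983,407,1008,307,915,592,188,183,723,8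74,0,759,330,444,482,0,390,449,914,547,0,407,410,376,531,0,361,469,591,880,0,409,263,105,603],[0,0,0,0,0,0,0,0,0,0,0,0,0,0,0,0,0,0,0,0,0,0,0,0,0,0,0,0,0,0,0,0,0,0,0,855,244,490,105,0,113,755,413,418,990],[0,0,0,0,0,0,0,0,0,0,0,652,646,298,417,749,517,125,61,496,222,646,149,58,0,308,988,442,698,0,517,778,427,183,0,996,88,15,577,0,280,155,72,590,0,186],[0,0,0,0,0,0,0,0,0,0,0,0,0,0,0,0,352,342,82,513,267,468,29,811,633,664,459,163,160,0,449,797,550,596,0,736,201,205,772,0,228,773,406,992,0,58,302],[0,0,0,0,0,0,0,0,0,0,0,0,0,0,0,0,0,0,0,0,0,64,254,113,376,745,258,28,98,482,642,330,942,197,0,115,202,571,122,0,731,249,666,23,0,593,349,437],[0,0,0,0,0,0,0,0,0,0,0,0,0,0,0,0,0,0,0,0,0,0,0,0,0,0,856,694,225,527,198,890,140,80,645,838,109,304,178,0,156,374,759,452,0,815,152,819,10],[0,0,0,0,0,0,0,0,0,0,0,0,0,0,0,0,0,0,0,0,0,0,0,0,0,0,0,0,0,0,0,0,0,0,0,0,0,0,0,0,939,870,936,648,0,832,474,189,443,538]]"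
definition PL :: "int list" where "PL = [0,0,0,0,0,0,0,0,3,-12,-3,0,0,0,0,-3,-15,0,0,0,0,-4,-1,-15,9,0,0,0,0,-13,5,9,15,8,-1,0,-8,-3,0,-1,20,20,0,0,26,0,-18,-20,-16,-16,0,0,28,0,-10,16,23,13,-3,0,11,10,0,-3,12,6,-2,0,-16,-12,0,-2,-8,-18,-8,0,24,18,0,-8,8,-8,-8,0,-8,-2,0,-8]"

definition xi :: "nat \<Rightarrow> int" where "xi n = (if n < 88 then XL ! n else 0)"
definition ci :: "nat \<Rightarrow> int" where "ci n = (if n < 64 then CL ! n else 0)"
definition phi :: "nat \<Rightarrow> int" where "phi n = (if n < 88 then PL ! n else 0)"
definition x0 :: "nat \<Rightarrow> complex" where "x0 = (\<lambda>n. of_int (xi n))"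
definition c0 :: "nat \<Rightarrow> complex" where "c0 = (\<lambda>n. of_int (ci n))"

fun dot :: "int list \<Rightarrow> int list \<Rightarrow> int" where
  "dot (a#as) (b#bs) = a * b + dot as bs" | "dot _ _ = 0"

lemma dot_sum: "dot xs ys = (\<Sum>k<min (length xs) (length ys). xs!k * ys!k)"
proof (induction xs arbitrary: ys)
  case Nil then show ?case by simp
next
  case (Cons a xs) then show ?case
    by (cases ys) (simp_all add: sum.lessThan_Suc_shift del: sum.lessThan_Suc)
qed

definition chkLU :: bool where
  "chkLU = (length LL = 50 \<and> length UT = 50 \<and>
     list_all (\<lambda>(i, r). length r = Suc i \<and> r ! i = 1) (zip [0..<50] LL) \<and>
     list_all (\<lambda>(j, cl). length cl = Suc j) (zip [0..<50] UT) \<and>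
     prod_list (map (\<lambda>j. UT ! j ! j) [0..<50]) mod 1009 \<noteq> 0 \<and>
     list_all (\<lambda>(i, r). list_all (\<lambda>(j, cl). (dot r cl - ent ci xi (cols!j) (i div 5 + 1) (i mod 5)) mod 1009 = 0)
      (zip [0..<50] UT)) (zip [0..<50] LL))"

lemma chkLU_ok: chkLU by code_simp


lemma list_all_zip_upt: "length xs = n \<Longrightarrow> list_all (\<lambda>(i, r). P i r) (zip [0..<n] xs) \<longleftrightarrow> (\<forall>i<n. P i (xs!i))"
proof -
  assume l: "length xs = n"
  have "zip [0..<n] xs = map (\<lambda>i. (i, xs!i)) [0..<n]" using l by (intro nth_equalityI) auto
  then show ?thesis by (auto simp: list_all_iff)
qed

lemma chk_facts:
  "\<forall>i<50. length (LL!i) = Suc i \<and> LL!i!i = 1"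
  "\<forall>j<50. length (UT!j) = Suc j"
  "prod_list (map (\<lambda>j. UT!j!j) [0..<50]) mod 1009 \<noteq> 0"
  "\<forall>i<50. \<forall>j<50. (dot (LL!i) (UT!j) - ent ci xi (cols!j) (i div 5 + 1) (i mod 5)) mod 1009 = 0"
proof -
  note cc = chkLU_ok[unfolded chkLU_def]
  have L: "length LL = 50" using cc by (rule conjunct1)
  have U: "length UT = 50" using cc[THEN conjunct2] by (rule conjunct1)
  note c1 = cc[THEN conjunct2, THEN conjunct2, THEN conjunct1]
  note c2 = cc[THEN conjunct2, THEN conjunct2, THEN conjunct2, THEN conjunct1]
  note c3 = cc[THEN conjunct2, THEN conjunct2, THEN conjunct2, THEN conjunct2, THEN conjunct1]
  note c4 = cc[THEN conjunct2, THEN conjunct2, THEN conjunct2, THEN conjunct2, THEN conjunct2]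
  show "\<forall>i<50. length (LL!i) = Suc i \<and> LL!i!i = 1"
    using c1 by (simp only: list_all_zip_upt[OF L])
  show "\<forall>j<50. length (UT!j) = Suc j"
    using c2 by (simp only: list_all_zip_upt[OF U])
  show "prod_list (map (\<lambda>j. UT!j!j) [0..<50]) mod 1009 \<noteq> 0" using c3 .
  show "\<forall>i<50. \<forall>j<50. (dot (LL!i) (UT!j) - ent ci xi (cols!j) (i div 5 + 1) (i mod 5)) mod 1009 = 0"
    using c4 by (simp only: list_all_zip_upt[OF L] list_all_zip_upt[OF U])
qed

definition LLm :: "int mat" where "LLm = mat 50 50 (\<lambda>(i,j). if j < length (LL!i) then LL!i!j else 0)"
definition UUm :: "int mat" where "UUm = mat 50 50 (\<lambda>(i,j). if i < length (UT!j) then UT!j!i else 0)"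

lemma sum_trunc:
  fixes f g :: "nat \<Rightarrow> int"
  assumes "a \<le> n" "b \<le> n"
  shows "(\<Sum>k\<in>{0..<n}. (if k < a then f k else 0) * (if k < b then g k else 0)) = (\<Sum>k<min a b. f k * g k)"
proof -
  have "(\<Sum>k\<in>{0..<n}. (if k < a then f k else 0) * (if k < b then g k else 0)) = (\<Sum>k\<in>{..<min a b}. (if k < a then f k else 0) * (if k < b then g k else 0))"
    using assms by (intro sum.mono_neutral_right) auto
  also have "\<dots> = (\<Sum>k<min a b. f k * g k)" by (intro sum.cong refl) auto
  finally show ?thesis .
qed

lemma LU_entry: "i < 50 \<Longrightarrow> j < 50 \<Longrightarrow> (LLm * UUm) $$ (i,j) = dot (LL!i) (UT!j)"
proof -
  assume i: "i < 50" and j: "j < 50"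
  have li: "length (LL!i) \<le> 50" and lj: "length (UT!j) \<le> 50" using chk_facts(1,2) i j by auto
  have "(LLm * UUm) $$ (i,j) = (\<Sum>k\<in>{0..<50}. (if k < length (LL!i) then LL!i!k else 0) * (if k < length (UT!j) then UT!j!k else 0))"
    using i j by (auto simp: LLm_def UUm_def scalar_prod_def intro!: sum.cong)
  also have "\<dots> = dot (LL!i) (UT!j)" by (simp add: sum_trunc[OF li lj] dot_sum)
  finally show ?thesis .
qed

lemma prod_ones: "prod_list (map (\<lambda>i. 1::int) xs) = 1" by (induction xs) simp_all

lemma det_LU: "det (LLm * UUm) = prod_list (map (\<lambda>j. UT!j!j) [0..<50])"
proof -
  have Lc: "LLm \<in> carrier_mat 50 50" and Uc: "UUm \<in> carrier_mat 50 50" by (simp_all add: LLm_def UUm_def)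
  have "det LLm = prod_list (diag_mat LLm)"
    by (rule det_lower_triangular[OF _ Lc]) (use chk_facts(1) in \<open>auto simp: LLm_def\<close>)
  also have "diag_mat LLm = map (\<lambda>i. 1) [0..<50]"
    using chk_facts(1) by (auto simp: diag_mat_def LLm_def intro!: nth_equalityI)
  also have "prod_list (map (\<lambda>i. 1::int) [0..<50]) = 1" by (rule prod_ones)
  finally have dL: "det LLm = 1" .
  have "upper_triangular UUm" using chk_facts(2) by (auto simp: upper_triangular_def UUm_def)
  then have "det UUm = prod_list (diag_mat UUm)" by (rule det_upper_triangular[OF _ Uc])
  also have "diag_mat UUm = map (\<lambda>j. UT!j!j) [0..<50]"
    using chk_facts(2) by (auto simp: diag_mat_def UUm_def intro!: nth_equalityI)
  finally have dU: "det UUm = prod_list (map (\<lambda>j. UT!j!j) [0..<50])" .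
  show ?thesis using det_mult[OF Lc Uc] dL dU by simp
qed

lemma det_cong:
  fixes A B :: "int mat"
  assumes A: "A \<in> carrier_mat n n" and B: "B \<in> carrier_mat n n"
   and e: "\<And>i j. i < n \<Longrightarrow> j < n \<Longrightarrow> [A $$ (i,j) = B $$ (i,j)] (mod m)"
  shows "[det A = det B] (mod m)"
  unfolding det_def'[OF A] det_def'[OF B]
  by (intro cong_sum cong_mult cong_refl cong_prod e) (auto simp: permutes_in_image)

lemma detMx_nz: "det (Mx ci xi) \<noteq> 0"
proof
  assume d0: "det (Mx ci xi) = 0"
  have "[det (Mx ci xi) = det (LLm * UUm)] (mod 1009)"
  proof (rule det_cong)
    show "Mx ci xi \<in> carrier_mat 50 50" by (simp add: Mx_def)
    show "LLm * UUm \<in> carrier_mat 50 50" by (rule mult_carrier_mat[of _ 50 50]) (simp_all add: LLm_def UUm_def)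
    fix i j :: nat assume i: "i < 50" and j: "j < 50"
    have "(dot (LL!i) (UT!j) - ent ci xi (cols!j) (i div 5 + 1) (i mod 5)) mod 1009 = 0" using chk_facts(4) i j by blast
    then show "[Mx ci xi $$ (i, j) = (LLm * UUm) $$ (i, j)] (mod 1009)"
      using i j by (simp add: LU_entry Mx_def cong_iff_dvd_diff mod_eq_0_iff_dvd dvd_diff_commute)
  qed
  then have "[0 = prod_list (map (\<lambda>j. UT!j!j) [0..<50])] (mod 1009)" using d0 det_LU by simp
  then show False using chk_facts(3) by (simp add: cong_def)
qed

lemma ent_of_int: "ent (\<lambda>n. of_int (c n)) (\<lambda>n. of_int (x n)) d j k = (of_int (ent c x d j k) :: 'a::comm_ring_1)"
  by (cases d) (simp_all add: ptv_def cub_def of_int_sum)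

lemma cub_of_int: "cub (\<lambda>n. of_int (c n)) (\<lambda>i. of_int (a i)) = (of_int (cub c a) :: 'a::comm_ring_1)"
  by (simp add: cub_def of_int_sum)

lemma Mx_of_int: "Mx c0 x0 = map_mat of_int (Mx ci xi)"
  by (rule eq_matI) (simp_all add: Mx_def c0_def x0_def ent_of_int)

lemma det_Mx0: "det (Mx c0 x0) \<noteq> 0"
  using detMx_nz by (simp add: Mx_of_int of_int_hom.hom_det)

definition dv :: "(nat \<Rightarrow> 'a::comm_ring_1) \<Rightarrow> (nat \<Rightarrow> 'a) \<Rightarrow> 'a" where
  "dv f a = f 0 * a 0 + f 1 * a 1 + f 2 * a 2 + f 3 * a 3"

lemma dv_of_int: "dv (\<lambda>k. of_int (f k)) (\<lambda>k. of_int (a k)) = (of_int (dv f a) :: 'a::comm_ring_1)"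
  by (simp add: dv_def)

definition aI :: "nat \<Rightarrow> nat \<Rightarrow> int" where "aI j = (\<lambda>k. xi (8*j+k))"
definition bI :: "nat \<Rightarrow> nat \<Rightarrow> int" where "bI j = (\<lambda>k. xi (8*j+4+k))"
definition f1 :: "nat \<Rightarrow> nat \<Rightarrow> int" where "f1 j = (\<lambda>k. phi (8*j+k))"
definition f2 :: "nat \<Rightarrow> nat \<Rightarrow> int" where "f2 j = (\<lambda>k. phi (8*j+4+k))"

definition chkT :: bool where
 "chkT = (list_all (\<lambda>j. dv (f1 j) (aI j) = 0 \<and> dv (f1 j) (bI j) = 0 \<and> dv (f2 j) (aI j) = 0 \<and> dv (f2 j) (bI j) = 0 \<and>
        list_ex (\<lambda>(m,n). aI j m * bI j n - aI j n * bI j m \<noteq> 0) [(0,1),(0,2),(0,3),(1,2),(1,3),(2,3)]) [1..<11] \<and>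
   list_all (\<lambda>i. list_all (\<lambda>j. i \<noteq> j \<longrightarrow> ((dv (f1 j) (aI i) \<noteq> 0 \<or> dv (f2 j) (aI i) \<noteq> 0 \<or> dv (f1 j) (bI i) \<noteq> 0 \<or> dv (f2 j) (bI i) \<noteq> 0) \<and>
        (if j = i + 1 then list_all (\<lambda>k. aI j k = aI i k + bI i k) [0..<4]
         else if i = j + 1 then True
         else dv (f1 i) (aI j) * dv (f2 i) (bI j) - dv (f1 i) (bI j) * dv (f2 i) (aI j) \<noteq> 0))) [1..<11]) [1..<11] \<and>
   list_all (\<lambda>j. cub ci (aI j) \<noteq> 0) [1..<11])"

lemma chkT_ok: chkT by code_simp

lemma L1:
  fixes a b :: "nat \<Rightarrow> complex"
  assumes m: "m < 4" and n: "n < 4" and d: "a m * b n - a n * b m \<noteq> 0"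
  shows "lin_indep2 a b"
  unfolding lin_indep2_def
proof (intro allI impI)
  fix s t assume h: "\<forall>i<4. s * a i + t * b i = 0"
  then have e1: "s * a m + t * b m = 0" and e2: "s * a n + t * b n = 0" using m n by auto
  have "s * (a m * b n - a n * b m) = b n * (s * a m + t * b m) - b m * (s * a n + t * b n)" by (simp add: algebra_simps)
  then have s0: "s = 0" using e1 e2 d by simp
  have "t * (a m * b n - a n * b m) = a m * (s * a n + t * b n) - a n * (s * a m + t * b m)" by (simp add: algebra_simps)
  then have t0: "t = 0" using e1 e2 d by simp
  show "s = 0 \<and> t = 0" using s0 t0 by simp
qed

lemma nz_A: "lin_indep2 a b \<Longrightarrow> nz a"
proof (rule ccontr)
  assume li: "lin_indep2 a b" and "\<not> nz a"
  then have "\<forall>i<4. 1 * a i + 0 * b i = 0" by (auto simp: nz_def)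
  with li have "(1::complex) = 0" unfolding lin_indep2_def by blast
  then show False by simp
qed

lemma nz_B: "lin_indep2 a b \<Longrightarrow> nz b"
proof (rule ccontr)
  assume li: "lin_indep2 a b" and "\<not> nz b"
  then have "\<forall>i<4. 0 * a i + 1 * b i = 0" by (auto simp: nz_def)
  with li have "(1::complex) = 0" unfolding lin_indep2_def by blast
  then show False by simp
qed

lemma onL_A: "lin_indep2 (lnA x i) (lnB x i) \<Longrightarrow> on_L x i (lnA x i)"
proof -
  assume li: "lin_indep2 (lnA x i) (lnB x i)"
  have "nz (lnA x i)" using nz_A[OF li] .
  moreover have "\<forall>k<4. lnA x i k = 1 * lnA x i k + 0 * lnB x i k" by simp
  ultimately show ?thesis unfolding on_L_def on_line_def by blast
qed

lemma onL_B: "lin_indep2 (lnA x i) (lnB x i) \<Longrightarrow> on_L x i (lnB x i)"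
proof -
  assume li: "lin_indep2 (lnA x i) (lnB x i)"
  have "nz (lnB x i)" using nz_B[OF li] .
  moreover have "\<forall>k<4. lnB x i k = 0 * lnA x i k + 1 * lnB x i k" by simp
  ultimately show ?thesis unfolding on_L_def on_line_def by blast
qed

lemma onL_dv:
  assumes "dv f (lnA x j) = 0" "dv f (lnB x j) = 0" "on_L x j p"
  shows "dv f p = 0"
proof -
  from assms(3) obtain s t where ps: "\<forall>k<4. p k = s * lnA x j k + t * lnB x j k"
    unfolding on_L_def on_line_def by blast
  have "dv f p = s * dv f (lnA x j) + t * dv f (lnB x j)" using ps by (simp add: dv_def algebra_simps)
  then show ?thesis using assms by simp
qed

lemma nonmeet:
  assumes "dv f (lnA x i) = 0" "dv f (lnB x i) = 0" "dv g (lnA x i) = 0" "dv g (lnB x i) = 0"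
    and d: "dv f (lnA x j) * dv g (lnB x j) - dv f (lnB x j) * dv g (lnA x j) \<noteq> 0"
  shows "\<not> meets x i j"
proof
  assume "meets x i j"
  then obtain p where pi: "on_L x i p" and pj: "on_L x j p" unfolding meets_def by blast
  have z1: "dv f p = 0" using onL_dv[OF assms(1,2) pi] .
  have z2: "dv g p = 0" using onL_dv[OF assms(3,4) pi] .
  from pj obtain s t where nzp: "nz p" and ps: "\<forall>k<4. p k = s * lnA x j k + t * lnB x j k"
    unfolding on_L_def on_line_def by blast
  have e1: "s * dv f (lnA x j) + t * dv f (lnB x j) = 0"
  proof -
    have "s * dv f (lnA x j) + t * dv f (lnB x j) = dv f p" using ps by (simp add: dv_def algebra_simps)
    then show ?thesis using z1 by simp
  qed
  have e2: "s * dv g (lnA x j) + t * dv g (lnB x j) = 0"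
  proof -
    have "s * dv g (lnA x j) + t * dv g (lnB x j) = dv g p" using ps by (simp add: dv_def algebra_simps)
    then show ?thesis using z2 by simp
  qed
  have "s * (dv f (lnA x j) * dv g (lnB x j) - dv f (lnB x j) * dv g (lnA x j)) =
        dv g (lnB x j) * (s * dv f (lnA x j) + t * dv f (lnB x j)) - dv f (lnB x j) * (s * dv g (lnA x j) + t * dv g (lnB x j))"
    by (simp add: algebra_simps)
  then have s0: "s = 0" using e1 e2 d by simp
  have "t * (dv f (lnA x j) * dv g (lnB x j) - dv f (lnB x j) * dv g (lnA x j)) =
        dv f (lnA x j) * (s * dv g (lnA x j) + t * dv g (lnB x j)) - dv g (lnA x j) * (s * dv f (lnA x j) + t * dv f (lnB x j))"
    by (simp add: algebra_simps)
  then have t0: "t = 0" using e1 e2 d by simp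
  have "\<forall>k<4. p k = 0" using ps s0 t0 by simp
  then show False using nzp unfolding nz_def by blast
qed

lemma distinct_pt:
  assumes "dv f (lnA x j) = 0" "dv f (lnB x j) = 0" "dv g (lnA x j) = 0" "dv g (lnB x j) = 0"
    and q: "on_L x i q" and nq: "dv f q \<noteq> 0 \<or> dv g q \<noteq> 0"
  shows "\<exists>p. on_L x i p \<and> \<not> on_L x j p"
  using onL_dv[OF assms(1,2)] onL_dv[OF assms(3,4)] q nq by blast

definition F1 :: "nat \<Rightarrow> nat \<Rightarrow> complex" where "F1 j = (\<lambda>k. of_int (f1 j k))"
definition F2 :: "nat \<Rightarrow> nat \<Rightarrow> complex" where "F2 j = (\<lambda>k. of_int (f2 j k))"

lemma lnA0: "lnA x0 j = (\<lambda>k. of_int (aI j k))" by (simp add: lnA_def x0_def aI_def)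
lemma lnB0: "lnB x0 j = (\<lambda>k. of_int (bI j k))" by (simp add: lnB_def x0_def bI_def add.assoc)

lemma dvs:
  "dv (F1 j) (lnA x0 i) = of_int (dv (f1 j) (aI i))" "dv (F1 j) (lnB x0 i) = of_int (dv (f1 j) (bI i))"
  "dv (F2 j) (lnA x0 i) = of_int (dv (f2 j) (aI i))" "dv (F2 j) (lnB x0 i) = of_int (dv (f2 j) (bI i))"
  by (simp_all only: F1_def F2_def lnA0 lnB0 dv_of_int)

lemma set_1_10: "set [1..<11] = {1..10::nat}" by auto

lemmas cT = chkT_ok[unfolded chkT_def]
lemmas cT1 = cT[THEN conjunct1, unfolded list_all_iff set_1_10]
lemmas cT2 = cT[THEN conjunct2, THEN conjunct1, unfolded list_all_iff set_1_10]
lemmas cT3 = cT[THEN conjunct2, THEN conjunct2, unfolded list_all_iff set_1_10]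

lemma T1:
  assumes j: "j \<in> {1..10}"
  shows "dv (F1 j) (lnA x0 j) = 0 \<and> dv (F1 j) (lnB x0 j) = 0 \<and> dv (F2 j) (lnA x0 j) = 0 \<and> dv (F2 j) (lnB x0 j) = 0
     \<and> lin_indep2 (lnA x0 j) (lnB x0 j)"
proof -
  note h = bspec[OF cT1 j]
  then obtain m n where mn: "(m,n) \<in> set [(0::nat,1::nat),(0,2),(0,3),(1,2),(1,3),(2,3)]" and d: "aI j m * bI j n - aI j n * bI j m \<noteq> 0"
    unfolding list_ex_iff by (elim conjE) blast
  have m4: "m < 4" "n < 4" using mn by auto
  have "lnA x0 j m * lnB x0 j n - lnA x0 j n * lnB x0 j m = of_int (aI j m * bI j n - aI j n * bI j m)"
    by (simp add: lnA0 lnB0)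
  then have "lnA x0 j m * lnB x0 j n - lnA x0 j n * lnB x0 j m \<noteq> 0" using d by (simp only: of_int_eq_0_iff not_False_eq_True)
  then have "lin_indep2 (lnA x0 j) (lnB x0 j)" using L1 m4 by blast
  then show ?thesis using h by (simp add: dvs)
qed

lemma T2h:
  assumes i: "i \<in> {1..10}" and j: "j \<in> {1..10}" and ij: "i \<noteq> j"
  shows "(dv (f1 j) (aI i) \<noteq> 0 \<or> dv (f2 j) (aI i) \<noteq> 0 \<or> dv (f1 j) (bI i) \<noteq> 0 \<or> dv (f2 j) (bI i) \<noteq> 0) \<and>
        (if j = i + 1 then (\<forall>k\<in>set [0..<4]. aI j k = aI i k + bI i k)
         else if i = j + 1 then True
         else dv (f1 i) (aI j) * dv (f2 i) (bI j) - dv (f1 i) (bI j) * dv (f2 i) (aI j) \<noteq> 0)"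
  by (rule mp[OF bspec[OF bspec[OF cT2 i] j] ij])

lemma T2a:
  assumes i: "i \<in> {1..10}" and j: "j \<in> {1..10}" and ij: "i \<noteq> j"
  shows "dv (F1 j) (lnA x0 i) \<noteq> 0 \<or> dv (F2 j) (lnA x0 i) \<noteq> 0 \<or> dv (F1 j) (lnB x0 i) \<noteq> 0 \<or> dv (F2 j) (lnB x0 i) \<noteq> 0"
proof -
  have h: "dv (f1 j) (aI i) \<noteq> 0 \<or> dv (f2 j) (aI i) \<noteq> 0 \<or> dv (f1 j) (bI i) \<noteq> 0 \<or> dv (f2 j) (bI i) \<noteq> 0"
    using T2h[OF i j ij] by (rule conjunct1)
  show ?thesis unfolding dvs of_int_eq_0_iff by (rule h)
qed

lemma T2b:
  assumes i: "i \<in> {1..10}" and j: "j \<in> {1..10}" and ji: "j = i + 1"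
  shows "\<forall>k<4. lnA x0 j k = lnA x0 i k + lnB x0 i k"
proof (intro allI impI)
  fix k :: nat assume k: "k < 4"
  have ij: "i \<noteq> j" using ji by simp
  have h: "\<forall>k\<in>set [0..<4]. aI j k = aI i k + bI i k"
    using T2h[OF i j ij, THEN conjunct2] unfolding if_P[OF ji] .
  have "aI j k = aI i k + bI i k" using h k by simp
  then have "(of_int (aI j k) :: complex) = of_int (aI i k) + of_int (bI i k)" by simp
  then show "lnA x0 j k = lnA x0 i k + lnB x0 i k" by (simp only: lnA0 lnB0)
qed

lemma T2c:
  assumes i: "i \<in> {1..10}" and j: "j \<in> {1..10}" and ij: "i \<noteq> j" and n1: "j \<noteq> i + 1" and n2: "i \<noteq> j + 1"
  shows "dv (F1 i) (lnA x0 j) * dv (F2 i) (lnB x0 j) - dv (F1 i) (lnB x0 j) * dv (F2 i) (lnA x0 j) \<noteq> 0"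
proof -
  have h0: "(if j = i + 1 then (\<forall>k\<in>set [0..<4]. aI j k = aI i k + bI i k)
         else if i = j + 1 then True
         else dv (f1 i) (aI j) * dv (f2 i) (bI j) - dv (f1 i) (bI j) * dv (f2 i) (aI j) \<noteq> 0)"
    using T2h[OF i j ij] by (rule conjunct2)
  have h: "dv (f1 i) (aI j) * dv (f2 i) (bI j) - dv (f1 i) (bI j) * dv (f2 i) (aI j) \<noteq> 0"
    using h0 unfolding if_not_P[OF n1] if_not_P[OF n2] .
  have "dv (F1 i) (lnA x0 j) * dv (F2 i) (lnB x0 j) - dv (F1 i) (lnB x0 j) * dv (F2 i) (lnA x0 j)
     = of_int (dv (f1 i) (aI j) * dv (f2 i) (bI j) - dv (f1 i) (bI j) * dv (f2 i) (aI j))"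
    by (simp only: dvs of_int_mult of_int_diff)
  then show ?thesis using h by (simp only: of_int_eq_0_iff not_False_eq_True)
qed

lemma meets_sym: "meets x i j = meets x j i" unfolding meets_def by blast

lemma meets_edge:
  assumes i: "i \<in> {1..10}" and j: "j \<in> {1..10}" and ji: "j = i + 1"
  shows "meets x0 i j"
proof -
  have a: "\<forall>k<4. lnA x0 j k = lnA x0 i k + lnB x0 i k" using T2b[OF i j ji] .
  have lj: "lin_indep2 (lnA x0 j) (lnB x0 j)" using T1[OF j] by simp
  have "on_L x0 i (lnA x0 j)" unfolding on_L_def on_line_def using nz_A[OF lj] a
    by (auto intro!: exI[of _ 1])
  moreover have "on_L x0 j (lnA x0 j)" using onL_A[OF lj] .
  ultimately show ?thesis unfolding meets_def by blast
qed

lemma x0_T3: "x0 \<in> T3 10 (\<lambda>i. i - 1)"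
  unfolding T3_def
proof (intro CollectI conjI ballI impI)
  fix i assume "i \<in> {1..10::nat}" then show "lin_indep2 (lnA x0 i) (lnB x0 i)" using T1 by blast
next
  fix i j assume i: "i \<in> {1..10::nat}" and j: "j \<in> {1..10::nat}" and ij: "i \<noteq> j"
  have Ti: "dv (F1 i) (lnA x0 i) = 0 \<and> dv (F1 i) (lnB x0 i) = 0 \<and> dv (F2 i) (lnA x0 i) = 0 \<and> dv (F2 i) (lnB x0 i) = 0
     \<and> lin_indep2 (lnA x0 i) (lnB x0 i)" using T1[OF i] .
  have Tj: "dv (F1 j) (lnA x0 j) = 0 \<and> dv (F1 j) (lnB x0 j) = 0 \<and> dv (F2 j) (lnA x0 j) = 0 \<and> dv (F2 j) (lnB x0 j) = 0
     \<and> lin_indep2 (lnA x0 j) (lnB x0 j)" using T1[OF j] .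
  have T2ij: "dv (F1 j) (lnA x0 i) \<noteq> 0 \<or> dv (F2 j) (lnA x0 i) \<noteq> 0 \<or> dv (F1 j) (lnB x0 i) \<noteq> 0 \<or> dv (F2 j) (lnB x0 i) \<noteq> 0"
    using T2a[OF i j ij] .
  show "\<exists>p. on_L x0 i p \<and> \<not> on_L x0 j p"
  proof -
    have oa: "on_L x0 i (lnA x0 i)" and ob: "on_L x0 i (lnB x0 i)" using onL_A onL_B Ti by blast+
    have d1: "dv (F1 j) (lnA x0 i) \<noteq> 0 \<or> dv (F2 j) (lnA x0 i) \<noteq> 0 \<Longrightarrow> ?thesis"
      using distinct_pt[of "F1 j" x0 j "F2 j" i "lnA x0 i"] Tj oa by blast
    have d2: "dv (F1 j) (lnB x0 i) \<noteq> 0 \<or> dv (F2 j) (lnB x0 i) \<noteq> 0 \<Longrightarrow> ?thesis"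
      using distinct_pt[of "F1 j" x0 j "F2 j" i "lnB x0 i"] Tj ob by blast
    show ?thesis using T2ij d1 d2 by blast
  qed
  show "meets x0 i j \<longleftrightarrow> (2 \<le> i \<and> j = i - 1 \<or> 2 \<le> j \<and> i = j - 1)"
  proof (cases "j = i + 1")
    case True
    then show ?thesis using meets_edge[OF i j True] i by auto
  next
    case False
    show ?thesis
    proof (cases "i = j + 1")
      case True
      then show ?thesis using meets_edge[OF j i True] meets_sym[of x0 i j] j by auto
    next
      case False2: False
      have "dv (F1 i) (lnA x0 j) * dv (F2 i) (lnB x0 j) - dv (F1 i) (lnB x0 j) * dv (F2 i) (lnA x0 j) \<noteq> 0"
        using T2c[OF i j ij False False2] .
      then have "\<not> meets x0 i j" using nonmeet Ti by blast
      moreover have "\<not> (2 \<le> i \<and> j = i - 1 \<or> 2 \<le> j \<and> i = j - 1)" using False False2 i j by auto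
      ultimately show ?thesis by blast
    qed
  qed
qed

lemma fpoly0: "fpoly c0 x0 \<noteq> 0"
proof -
  have "\<forall>j\<in>{1..10}. cub ci (aI j) \<noteq> 0" by (rule cT3)
  moreover have "cub c0 (\<lambda>i. x0 (8*j+i)) = of_int (cub ci (aI j))" for j
    unfolding c0_def x0_def aI_def by (rule cub_of_int)
  ultimately have "(\<Prod>j\<in>{1..10::nat}. cub c0 (\<lambda>i. x0 (8*j+i))) \<noteq> 0" by simp
  then show ?thesis using det_Mx0 by (simp add: fpoly_def)
qed

lemma xt4: "xt 4 = 10"
  by code_simp

theorem lemma15:
  shows "general_on UNIV (\<lambda>c. \<exists>\<tau>. is_type (xt 4) \<tau> \<and>
           general_on (T3 (xt 4) \<tau>) (\<lambda>x. transversal (xt 4) c x \<longrightarrow> h1_vanish4 (xt 4) c x))"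
  unfolding general_on_def xt4
proof (intro bexI[of _ "\<lambda>c. fpoly c x0"] conjI ballI impI)
  show "(\<lambda>c. fpoly c x0) \<in> polyfun" by (rule pf_outer)
  show "\<exists>c\<in>UNIV. fpoly c x0 \<noteq> 0" using fpoly0 by blast
  fix c :: "nat \<Rightarrow> complex" assume fc: "fpoly c x0 \<noteq> 0"
  show "\<exists>\<tau>. is_type 10 \<tau> \<and> (\<exists>f\<in>polyfun. (\<exists>x\<in>T3 10 \<tau>. f x \<noteq> 0) \<and> (\<forall>x\<in>T3 10 \<tau>. f x \<noteq> 0 \<longrightarrow> transversal 10 c x \<longrightarrow> h1_vanish4 10 c x))"
  proof (intro exI[of _ "\<lambda>i. i - 1"] conjI bexI[of _ "fpoly c"])
    show "is_type 10 (\<lambda>i. i - 1)" by (auto simp: is_type_def)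
    show "fpoly c \<in> polyfun" using pf_inner[of c] by simp
    show "\<exists>x\<in>T3 10 (\<lambda>i. i - 1). fpoly c x \<noteq> 0" using x0_T3 fc by blast
    show "\<forall>x\<in>T3 10 (\<lambda>i. i - 1). fpoly c x \<noteq> 0 \<longrightarrow> transversal 10 c x \<longrightarrow> h1_vanish4 10 c x"
      using mainB by blast
  qed
qed

end
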